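(* Let $b,c,t$ be positive integers, $n=tb$, and let $\mathbf{H}^{*}_{qc}$ be a $cb\times tb$ binary matrix which is a $c\times t$ array of $b\times b$ circulant matrices over $\mathbb{F}_2$, of rank $r$ over $\mathbb{F}_2$. Let $\mathcal{C}\subseteq\mathbb{F}_2^n$ be the code with parity-check matrix $\mathbf{H}^{*}_{qc}$ and $\Lambda=\mathcal{C}+2\mathbb{Z}^n=\{\mathbf{x}\in\mathbb{Z}^n:\mathbf{x}\bmod 2\in\mathcal{C}\}$. Suppose $l$ with $c\le l\le t$ is the least number of columns of circulants of $\mathbf{H}^{*}_{qc}$ forming a submatrix of rank $r$, and that the last $l$ columns of circulants form such a $cb\times lb$ submatrix $\mathbf{D}^{*}$. Suppose $d_1,\dots,d_l\in\{0,\dots,b\}$, $\bar d_j=b-d_j$, are such that the columns of $\mathbf{D}^{*}$ consisting, for each $j$, of the last $\bar d_j$ columns of its $j$-th column block (width $b$) are linearly independent over $\mathbb{F}_2$ and number exactly $r$. For each $i$ with $d_i\ge1$, let $\mathbf{w}_i=(\mathbf{w}_i^{(1)},\dots,\mathbf{w}_i^{(l)})\in\mathbb{F}_2^{lb}$, $\mathbf{w}_i^{(j)}\in\mathbb{F}_2^b$, be the vector with $\mathbf{D}^{*}\mathbf{w}_i^t=\mathbf{0}$ whose first $d_j$ entries of $\mathbf{w}_i^{(j)}$ are $(1,0,\dots,0)$ if $j=i$ and all $0$ otherwise; with $\sigma$ the cyclic right shift on $\mathbb{F}_2^b$, let $\mathbf{Q}$ be the $(lb-r)\times tb$ matrix with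 rows $(\mathbf{0}_{(t-l)b},\sigma^s(\mathbf{w}_i^{(1)}),\dots,\sigma^s(\mathbf{w}_i^{(l)}))$ for $i=1,\dots,l$, $s=0,\dots,d_i-1$. Let $\mathbf{G}=[\mathbf{I}_{(t-l)b}\,|\,\mathbf{G}']$ with $\mathbf{G}'$ a $(t-l)\times l$ array of $b\times b$ circulants, and assume $\mathbf{G}^{*}_{qc}=\begin{bmatrix}\mathbf{G}\\ \mathbf{Q}\end{bmatrix}$ is a generator matrix of $\mathcal{C}$. Let $\mathbf{R}=[\mathbf{0}_{r\times(t-l)b}\,|\,\mathbf{B}]$, where $\mathbf{B}$ is block diagonal with $j$-th block $[\mathbf{0}_{\bar d_j\times d_j}\ \ 2\mathbf{I}_{\bar d_j}]$, and let $\mathbf{G}_\Lambda=\begin{bmatrix}\mathbf{G}^{*}_{qc}\\ \mathbf{R}\end{bmatrix}$ (entries as integers). Then $|\det(\mathbf{G}_\Lambda)|=2^r$; that is, the volume of $\Lambda$ (the volume of a fundamental region, $\sqrt{\det(\mathbf{G}_\Lambda\mathbf{G}_\Lambda^t)}$) equals $2^r$, where $r=\mathrm{rank}_{\mathbb{F}_2}(\mathbf{H}^{*}_{qc})$.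
   Context: Codewords of a binary code are embedded in $\mathbb{Z}^n$ with entries $0,1$; $\Lambda=\mathcal{C}+2\mathbb{Z}^n$ is the Construction A (QC-LDPC) lattice of $\mathcal{C}$. *)

theory Defs
  imports "HOL-Library.Z2" "Jordan_Normal_Form.DL_Rank" "Jordan_Normal_Form.DL_Submatrix"
begin

text \<open>Conventions: matrices are Jordan_Normal_Form matrices; \<open>bit\<close> is the field F_2.
 All block indices are 0-based (paper block j corresponds to index j-1 here).\<close>

text \<open>A matrix is an array of b x b circulant blocks: entry (i,j) of each block
 depends only on (j - i) mod b (circulant generated by its first row).\<close>
definition circulant_blocks :: "nat \<Rightarrow> 'a mat \<Rightarrow> bool" where
  "circulant_blocks b M \<longleftrightarrow>
     (\<forall>i<dim_row M. \<forall>j<dim_col M.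
        M $$ (i, j) = M $$ (b * (i div b), b * (j div b) + (j mod b + b - i mod b) mod b))"

definition block_cols :: "nat \<Rightarrow> nat set \<Rightarrow> nat set" where
  "block_cols b S = {j. j div b \<in> S}"

definition col_block_submatrix :: "nat \<Rightarrow> 'a mat \<Rightarrow> nat set \<Rightarrow> 'a mat" where
  "col_block_submatrix b H S = submatrix H UNIV (block_cols b S)"

definition rank_F :: "'a::field mat \<Rightarrow> nat" where
  "rank_F A = vec_space.rank (dim_row A) A"

definition cols_lin_indep :: "'a::field mat \<Rightarrow> bool" where
  "cols_lin_indep A \<longleftrightarrow> distinct (cols A) \<and>
     module.lin_indpt class_ring (module_vec TYPE('a) (dim_row A)) (set (cols A))"

definition code_of_pcm :: "'a::field mat \<Rightarrow> 'a vec set" where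
  "code_of_pcm H = {x \<in> carrier_vec (dim_col H). H *\<^sub>v x = 0\<^sub>v (dim_row H)}"

text \<open>Generator matrix: its rows form a basis of the code (they are linearly
 independent and the codewords are exactly the combinations u G).\<close>
definition is_generator_matrix :: "'a::field mat \<Rightarrow> 'a vec set \<Rightarrow> bool" where
  "is_generator_matrix Gm C \<longleftrightarrow>
     {transpose_mat Gm *\<^sub>v u | u. u \<in> carrier_vec (dim_row Gm)} = C \<and>
     cols_lin_indep (transpose_mat Gm)"

text \<open>Row of Q for (i,s): zeros on the first (t-l)b positions, then
 sigma^s applied to each block w_i^(j), sigma the cyclic right shift on F_2^b.\<close>
definition Q_row :: "nat \<Rightarrow> nat \<Rightarrow> nat \<Rightarrow> (nat \<Rightarrow> bit vec) \<Rightarrow> nat \<Rightarrow> nat \<Rightarrow> bit vec" where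
  "Q_row t l b w i s = vec (t * b) (\<lambda>p.
     if p < (t - l) * b then 0
     else (let q = p - (t - l) * b in w i $ ((q div b) * b + (q mod b + b - s mod b) mod b)))"

definition Q_mat :: "nat \<Rightarrow> nat \<Rightarrow> nat \<Rightarrow> (nat \<Rightarrow> nat) \<Rightarrow> (nat \<Rightarrow> bit vec) \<Rightarrow> bit mat" where
  "Q_mat t l b d w = mat_of_rows (t * b)
     (concat (map (\<lambda>i. map (\<lambda>s. Q_row t l b w i s) [0..<d i]) [0..<l]))"

definition G_mat :: "nat \<Rightarrow> nat \<Rightarrow> nat \<Rightarrow> bit mat \<Rightarrow> bit mat" where
  "G_mat t l b G' = mat ((t - l) * b) (t * b) (\<lambda>(i, j).
     if j < (t - l) * b then (if i = j then 1 else 0) else G' $$ (i, j - (t - l) * b))"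

definition stack :: "'a mat \<Rightarrow> 'a mat \<Rightarrow> 'a mat" where
  "stack A B = mat_of_rows (dim_col A) (rows A @ rows B)"

text \<open>R = [0 | B], B block diagonal with j-th block [0_{dbar_j x d_j}  2 I_{dbar_j}].\<close>
definition R_mat :: "nat \<Rightarrow> nat \<Rightarrow> nat \<Rightarrow> (nat \<Rightarrow> nat) \<Rightarrow> int mat" where
  "R_mat t l b d = mat_of_rows (t * b)
     (concat (map (\<lambda>j. map (\<lambda>q. vec (t * b) (\<lambda>p.
         if p = (t - l) * b + j * b + d j + q then 2 else 0)) [0..<b - d j]) [0..<l]))"

definition bit_to_int :: "bit \<Rightarrow> int" where
  "bit_to_int x = (if x = 1 then 1 else 0)"

end

theory Submission
  imports Defs
begin

lemma det_pivot:
  fixes A :: "int mat" and \<pi> :: "nat \<Rightarrow> nat" and \<rho> :: "nat \<Rightarrow> nat"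
  assumes A: "A \<in> carrier_mat n n"
    and pi: "\<pi> permutes {0..<n}"
    and inj: "inj_on \<rho> {0..<n}"
    and piv: "\<And>i j. i < n \<Longrightarrow> j < n \<Longrightarrow> A $$ (i, j) \<noteq> 0 \<Longrightarrow> \<rho> j \<le> \<rho> (\<pi> i)"
  shows "det A = signof \<pi> * (\<Prod>i = 0..<n. A $$ (i, \<pi> i))"
proof -
  let ?f = "\<lambda>p. signof p * (\<Prod> i = 0 ..< n. A $$ (i, p i))"
  have zero: "?f \<sigma> = 0" if s: "\<sigma> permutes {0..<n}" and ne: "\<sigma> \<noteq> \<pi>" for \<sigma>
  proof (rule ccontr)
    assume "?f \<sigma> \<noteq> 0"
    hence nz: "\<And>i. i < n \<Longrightarrow> A $$ (i, \<sigma> i) \<noteq> 0" by auto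
    have sl: "\<sigma> i < n" if "i < n" for i using permutes_in_image[OF s] that by auto
    have le: "\<And>i. i \<in> {0..<n} \<Longrightarrow> \<rho> (\<sigma> i) \<le> \<rho> (\<pi> i)" using piv nz sl by auto
    have e1: "(\<Sum>i\<in>{0..<n}. \<rho> (\<sigma> i)) = (\<Sum>j\<in>{0..<n}. \<rho> j)"
      by (metis (no_types, lifting) sum.reindex_cong[OF permutes_inj_on[OF s] permutes_image[OF s, symmetric]])
    have e2: "(\<Sum>i\<in>{0..<n}. \<rho> (\<pi> i)) = (\<Sum>j\<in>{0..<n}. \<rho> j)"
      by (metis (no_types, lifting) sum.reindex_cong[OF permutes_inj_on[OF pi] permutes_image[OF pi, symmetric]])
    have "\<sigma> = \<pi>"
    proof
      fix i show "\<sigma> i = \<pi> i"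
      proof (cases "i < n")
        case True
        have "\<rho> (\<sigma> i) = \<rho> (\<pi> i)"
          using sum_mono_inv[of "\<lambda>i. \<rho> (\<sigma> i)" "{0..<n}" "\<lambda>i. \<rho> (\<pi> i)", OF _ le] e1 e2 True by auto
        moreover have "\<pi> i < n" using permutes_in_image[OF pi] True by auto
        ultimately show ?thesis using inj sl True unfolding inj_on_def by auto
      next
        case False thus ?thesis using permutes_not_in[OF s] permutes_not_in[OF pi] by auto
      qed
    qed
    thus False using ne by simp
  qed
  have "det A = (\<Sum> p \<in> {p. p permutes {0 ..< n}}. ?f p)" by (rule det_def'[OF A])
  also have "\<dots> = ?f \<pi>"
    using sum.mono_neutral_left[of "{p. p permutes {0 ..< n}}" "{\<pi>}" ?f] zero pi
    by (simp add: finite_permutations)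
  finally show ?thesis .
qed

lemma list_all2_map_same: "(\<And>y. y \<in> set ys \<Longrightarrow> R (f y) (g y)) \<Longrightarrow> list_all2 R (map f ys) (map g ys)"
  by (induction ys) auto

lemma list_all2_concat_map_same:
  "(\<And>x. x \<in> set xs \<Longrightarrow> list_all2 R (f x) (g x)) \<Longrightarrow> list_all2 R (concat (map f xs)) (concat (map g xs))"
  by (induction xs) (auto intro: list_all2_appendI)

definition rho :: "nat \<Rightarrow> nat \<Rightarrow> nat \<Rightarrow> (nat \<Rightarrow> nat) \<Rightarrow> nat \<Rightarrow> nat" where
  "rho N0 l b d c = (if c < N0 then 2*l*b + c else
     (if (c - N0) mod b < d ((c - N0) div b) then l*b + ((c - N0) mod b)*l + (c - N0) div b
      else c - N0))"

lemma rho_small: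
  assumes "N0 \<le> c" "c < N0 + l*b" "b > 0"
  shows "rho N0 l b d c < 2*l*b"
proof -
  have j: "(c - N0) div b < l" using assms by (simp add: less_mult_imp_div_less)
  have k: "(c - N0) mod b < b" using assms by simp
  have "(c - N0) mod b * l + (c - N0) div b < b * l"
  proof -
    have "(c - N0) mod b * l + (c - N0) div b < (c - N0) mod b * l + l" using j by simp
    also have "\<dots> = (Suc ((c - N0) mod b)) * l" by simp
    also have "\<dots> \<le> b * l" using k by (intro mult_right_mono) auto
    finally show ?thesis .
  qed
  then show ?thesis using assms unfolding rho_def by (auto simp: algebra_simps)
qed

lemma rho_inj:
  assumes "b > 0"
  shows "inj_on (rho N0 l b d) {0..<N0 + l*b}"
proof (rule inj_onI)
  fix x y assume x: "x \<in> {0..<N0 + l*b}" and y: "y \<in> {0..<N0 + l*b}"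
    and e: "rho N0 l b d x = rho N0 l b d y"
  show "x = y"
  proof (cases "x < N0")
    case True
    then show ?thesis
    proof (cases "y < N0")
      case True with \<open>x < N0\<close> e show ?thesis unfolding rho_def by simp
    next
      case False
      then have "rho N0 l b d y < 2*l*b" using rho_small[of N0 y l b d] y assms by auto
      then show ?thesis using e True unfolding rho_def by simp
    qed
  next
    case xF: False
    then have rx: "rho N0 l b d x < 2*l*b" using rho_small[of N0 x l b d] x assms by auto
    show ?thesis
    proof (cases "y < N0")
      case True
      then show ?thesis using e rx unfolding rho_def by simp
    next
      case yF: False
      define qx where "qx = x - N0"
      define qy where "qy = y - N0"
      have qxl: "qx div b < l" "qx mod b < b" using x xF assms unfolding qx_def by (auto simp: less_mult_imp_div_less)
      have qyl: "qy div b < l" "qy mod b < b" using y yF assms unfolding qy_def by (auto simp: less_mult_imp_div_less)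
      have bnd: "k * l + j < b * l" if "k < b" "j < l" for k j
      proof -
        have "k * l + j < k * l + l" using that by simp
        also have "\<dots> = Suc k * l" by simp
        also have "\<dots> \<le> b * l" using that by (intro mult_right_mono) auto
        finally show ?thesis .
      qed
      have "qx = qy"
      proof (cases "qx mod b < d (qx div b)")
        case cx: True
        show ?thesis
        proof (cases "qy mod b < d (qy div b)")
          case cy: True
          have "qx mod b * l + qx div b = qy mod b * l + qy div b"
            using e xF yF cx cy unfolding rho_def qx_def qy_def by simp
          then have "(qx mod b * l + qx div b) mod l = (qy mod b * l + qy div b) mod l"
               "(qx mod b * l + qx div b) div l = (qy mod b * l + qy div b) div l" by simp_all
          then have "qx div b = qy div b" "qx mod b = qy mod b" using qxl qyl by simp_all
          then show ?thesis by (metis div_mult_mod_eq)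
        next
          case cy: False
          have "l*b \<le> rho N0 l b d x" using xF cx unfolding rho_def qx_def by simp
          moreover have "rho N0 l b d y < l*b" using yF cy y unfolding rho_def qy_def by auto
          ultimately show ?thesis using e by simp
        qed
      next
        case cx: False
        show ?thesis
        proof (cases "qy mod b < d (qy div b)")
          case cy: True
          have "l*b \<le> rho N0 l b d y" using yF cy unfolding rho_def qy_def by simp
          moreover have "rho N0 l b d x < l*b" using xF cx x unfolding rho_def qx_def by auto
          ultimately show ?thesis using e by simp
        next
          case cy: False
          then show ?thesis using e xF yF cx unfolding rho_def qx_def qy_def by simp
        qed
      qed
      then show ?thesis using xF yF unfolding qx_def qy_def by simp
    qed
  qed
qed

definition piv :: "nat \<Rightarrow> (nat \<Rightarrow> nat) \<Rightarrow> int \<Rightarrow> int vec \<Rightarrow> nat \<Rightarrow> bool" where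
  "piv n \<rho> e v p \<longleftrightarrow> v \<in> carrier_vec n \<and> p < n \<and> v $ p = e \<and> (\<forall>c<n. v $ c \<noteq> 0 \<longrightarrow> \<rho> c \<le> \<rho> p)"

lemma tlb: "l \<le> t \<Longrightarrow> (t - l) * b + l * b = t * (b::nat)"
  by (metis add_mult_distrib le_add_diff_inverse2)

lemma G_piv:
  assumes lt: "l \<le> t" and b: "b > 0" and i: "i < (t-l)*b"
  shows "piv (t*b) (rho ((t-l)*b) l b d) 1 (map_vec bit_to_int (row (G_mat t l b G') i)) i"
proof -
  have tb: "(t - l) * b + l * b = t * b" using tlb[OF lt] .
  have i2: "i < t*b" using i tb by linarith
  have ent: "map_vec bit_to_int (row (G_mat t l b G') i) $ c =
     bit_to_int (if c < (t - l) * b then (if i = c then 1 else 0) else G' $$ (i, c - (t - l) * b))"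
    if "c < t*b" for c
    using that i unfolding G_mat_def by simp
  show ?thesis unfolding piv_def
  proof (intro conjI allI impI)
    show "map_vec bit_to_int (row (G_mat t l b G') i) \<in> carrier_vec (t * b)"
      unfolding G_mat_def by (simp add: row_def)
    show "i < t*b" by fact
    show "map_vec bit_to_int (row (G_mat t l b G') i) $ i = 1"
      using ent[OF i2] i by (simp add: bit_to_int_def)
    fix c assume c: "c < t*b" and nz: "map_vec bit_to_int (row (G_mat t l b G') i) $ c \<noteq> 0"
    show "rho ((t - l) * b) l b d c \<le> rho ((t - l) * b) l b d i"
    proof (cases "c < (t-l)*b")
      case True
      then have "c = i" using nz ent[OF c] by (auto simp: bit_to_int_def split: if_splits)
      then show ?thesis by simp
    next
      case False
      then have "rho ((t - l) * b) l b d c < 2*l*b" using rho_small[of "(t-l)*b" c l b d] c b tb by auto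
      then show ?thesis using i unfolding rho_def by simp
    qed
  qed
qed

lemma R_piv:
  assumes lt: "l \<le> t" and b: "b > 0" and j: "j < l" and q: "q < b - d j"
  shows "piv (t*b) (rho ((t-l)*b) l b d) 2 (vec (t * b) (\<lambda>p. if p = (t - l) * b + j * b + d j + q then 2 else 0))
           ((t - l) * b + j * b + d j + q)"
proof -
  have tb: "(t - l) * b + l * b = t * b" using tlb[OF lt] .
  have "j * b + b \<le> l * b" using j by (metis Suc_leI mult_Suc mult_le_mono1 add.commute)
  then have "(t - l) * b + j * b + d j + q < t * b" using q tb by linarith
  then show ?thesis unfolding piv_def by auto
qed

lemma Q_piv:
  assumes lt: "l \<le> t" and b: "b > 0" and i: "i < l" and s: "s < d i" and dib: "d i \<le> b"
    and wp: "\<forall>j<l. \<forall>k<d j. w i $ (j * b + k) = (if j = i \<and> k = 0 then 1 else 0)"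
  shows "piv (t*b) (rho ((t-l)*b) l b d) 1 (map_vec bit_to_int (Q_row t l b w i s)) ((t - l) * b + i * b + s)"
proof -
  let ?N = "(t-l)*b"
  let ?v = "map_vec bit_to_int (Q_row t l b w i s)"
  have tb: "?N + l * b = t * b" using tlb[OF lt] .
  have sb: "s < b" using s dib by simp
  have ent: "?v $ c = bit_to_int (if c < ?N then 0 else
       w i $ (((c - ?N) div b) * b + ((c - ?N) mod b + b - s) mod b))" if "c < t*b" for c
    using that sb unfolding Q_row_def by (simp add: Let_def)
  have ib: "i * b + b \<le> l * b" using i by (metis Suc_leI mult_Suc mult_le_mono1 add.commute)
  have p: "?N + i * b + s < t * b" using ib sb tb by linarith
  have pq: "(i * b + s) div b = i" "(i * b + s) mod b = s" using sb by auto
  show ?thesis unfolding piv_def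
  proof (intro conjI allI impI)
    show "?v \<in> carrier_vec (t * b)" unfolding Q_row_def by simp
    show "?N + i * b + s < t * b" by fact
    have "0 < d i" using s by simp
    then have "w i $ (i * b + 0) = (if i = i \<and> (0::nat) = 0 then 1 else 0)" by (rule wp[rule_format, OF i])
    then have "w i $ (i * b + 0) = 1" by simp
    then show "?v $ (?N + i * b + s) = 1" using ent[OF p] pq by (simp add: bit_to_int_def)
    fix c assume c: "c < t*b" and nz: "?v $ c \<noteq> 0"
    have cN: "\<not> c < ?N" using nz ent[OF c] by (auto simp: bit_to_int_def)
    define q where "q = c - ?N"
    have cq: "c = ?N + q" using cN q_def by simp
    have ql: "q div b < l" "q mod b < b" using c cN tb b unfolding q_def by (auto simp: less_mult_imp_div_less)
    have rp: "rho ?N l b d (?N + i * b + s) = l*b + s*l + i"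
      using pq s unfolding rho_def by simp
    show "rho ?N l b d c \<le> rho ?N l b d (?N + i * b + s)"
    proof (cases "q mod b < d (q div b)")
      case False
      then have "rho ?N l b d c = q" using cq unfolding rho_def by simp
      also have "q < l * b" using c cq tb by linarith
      finally show ?thesis using rp by simp
    next
      case kd: True
      have rc: "rho ?N l b d c = l*b + (q mod b)*l + q div b" using cq kd unfolding rho_def by simp
      show ?thesis
      proof (cases "s \<le> q mod b")
        case True
        have m: "(q mod b + b - s) mod b = q mod b - s"
        proof -
          have "q mod b + b - s = (q mod b - s) + b" using True by simp
          then show ?thesis using ql by (metis mod_add_self2 less_imp_diff_less mod_less)
        qed
        have "w i $ ((q div b) * b + (q mod b - s)) \<noteq> 0"
        proof -
          have "?v $ c = bit_to_int (w i $ (q div b * b + (q mod b + b - s) mod b))"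
            using ent[OF c] cN by (simp add: q_def)
          then show ?thesis using nz m by (auto simp: bit_to_int_def split: if_splits)
        qed
        moreover have "q mod b - s < d (q div b)" using kd by linarith
        then have "w i $ ((q div b) * b + (q mod b - s)) = (if q div b = i \<and> q mod b - s = 0 then 1 else 0)"
          by (rule wp[rule_format, OF ql(1)])
        ultimately have "q div b = i \<and> q mod b - s = 0" by (auto split: if_splits)
        then have "q div b = i" "q mod b = s" using True by auto
        then show ?thesis using rc rp by simp
      next
        case False
        then have "q mod b * l + q div b < q mod b * l + l" using ql by simp
        also have "\<dots> = Suc (q mod b) * l" by simp
        also have "\<dots> \<le> s * l" using False by (intro mult_right_mono) auto
        finally show ?thesis using rc rp by simp
      qed
    qed
  qed
qed

theorem corollary1:
  fixes b c t l r :: nat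
    and H :: "bit mat" and G' :: "bit mat"
    and d :: "nat \<Rightarrow> nat" and w :: "nat \<Rightarrow> bit vec"
  assumes "b > 0" and "c > 0" and "t > 0"
    and H_dim: "H \<in> carrier_mat (c * b) (t * b)"
    and H_circ: "circulant_blocks b H"
    and r_def: "r = rank_F H"
    and l_bounds: "c \<le> l" "l \<le> t"
    and l_least: "l = (LEAST k. \<exists>S \<subseteq> {0..<t}. card S = k \<and>
                          rank_F (col_block_submatrix b H S) = r)"
    and D_rank: "rank_F (col_block_submatrix b H {t - l..<t}) = r"
    and d_range: "\<forall>j<l. d j \<le> b"
    and sel_indep: "cols_lin_indep (submatrix (col_block_submatrix b H {t - l..<t}) UNIV
                        {p. p < l * b \<and> d (p div b) \<le> p mod b})"
    and sel_card: "(\<Sum>j<l. b - d j) = r"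
    and w_props: "\<forall>i<l. d i \<ge> 1 \<longrightarrow>
          w i \<in> carrier_vec (l * b) \<and>
          col_block_submatrix b H {t - l..<t} *\<^sub>v w i = 0\<^sub>v (c * b) \<and>
          (\<forall>j<l. \<forall>k<d j. w i $ (j * b + k) = (if j = i \<and> k = 0 then 1 else 0))"
    and G'_dim: "G' \<in> carrier_mat ((t - l) * b) (l * b)"
    and G'_circ: "circulant_blocks b G'"
    and gen: "is_generator_matrix (stack (G_mat t l b G') (Q_mat t l b d w)) (code_of_pcm H)"
  shows "\<bar>det (stack (map_mat bit_to_int (stack (G_mat t l b G') (Q_mat t l b d w)))
                     (R_mat t l b d))\<bar> = 2 ^ r"
  proof -
  let ?N = "(t-l)*b"
  let ?n = "t*b"
  have b0: "b > 0" by fact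
  have tb: "?N + l * b = ?n" using tlb[OF l_bounds(2)] .
  define QL where "QL = concat (map (\<lambda>i. map (\<lambda>s. Q_row t l b w i s) [0..<d i]) [0..<l])"
  define PQ where "PQ = concat (map (\<lambda>i. map (\<lambda>s. ?N + i*b + s) [0..<d i]) [0..<l])"
  define RL where "RL = concat (map (\<lambda>j. map (\<lambda>q. vec (t * b) (\<lambda>p. if p = ?N + j * b + d j + q then 2 else (0::int))) [0..<b - d j]) [0..<l])"
  define PR where "PR = concat (map (\<lambda>j. map (\<lambda>q. ?N + j*b + d j + q) [0..<b - d j]) [0..<l])"
  define GG where "GG = G_mat t l b G'"
  define L1 where "L1 = map (map_vec bit_to_int) (rows GG @ QL)"
  define P1 where "P1 = [0..<?N] @ PQ"
  define \<rho> where "\<rho> = rho ?N l b d"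
  have Q_eq: "Q_mat t l b d w = mat_of_rows ?n QL" unfolding Q_mat_def QL_def ..
  have R_eq: "R_mat t l b d = mat_of_rows ?n RL" unfolding R_mat_def RL_def ..
  have QLc: "set QL \<subseteq> carrier_vec ?n" unfolding QL_def Q_row_def by auto
  have RLc: "set RL \<subseteq> carrier_vec ?n" unfolding RL_def by auto
  have GGd: "dim_col GG = ?n" "dim_row GG = ?N" unfolding GG_def G_mat_def by simp_all
  have GLc: "set (rows GG) \<subseteq> carrier_vec ?n" using rows_carrier[of GG] GGd by simp
  have L1c: "set L1 \<subseteq> carrier_vec ?n" using GLc QLc unfolding L1_def by auto
  have S1: "stack GG (Q_mat t l b d w) = mat_of_rows ?n (rows GG @ QL)"
    unfolding stack_def Q_eq using QLc GGd by simp
  have S2: "map_mat bit_to_int (stack GG (Q_mat t l b d w)) = mat_of_rows ?n L1"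
    unfolding S1 L1_def by (rule mat_of_rows_map[symmetric]) (use GLc QLc in auto)
  define L where "L = L1 @ RL"
  have A_eq: "stack (map_mat bit_to_int (stack GG (Q_mat t l b d w))) (R_mat t l b d) = mat_of_rows ?n L"
  proof -
    have "stack (mat_of_rows ?n L1) (mat_of_rows ?n RL) = mat_of_rows ?n L"
      unfolding stack_def L_def using L1c RLc by simp
    then show ?thesis by (simp only: S2 R_eq)
  qed
  have LA1: "list_all2 (piv ?n \<rho> 1) L1 P1"
  proof -
    have a: "list_all2 (piv ?n \<rho> 1) (map (map_vec bit_to_int) (rows GG)) [0..<?N]"
      unfolding list_all2_conv_all_nth using GGd
      by (auto simp: \<rho>_def GG_def intro!: G_piv[OF l_bounds(2) b0])
    have "map (map_vec bit_to_int) QL =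
        concat (map (\<lambda>i. map (\<lambda>s. map_vec bit_to_int (Q_row t l b w i s)) [0..<d i]) [0..<l])"
      unfolding QL_def by (simp add: map_concat o_def)
    moreover have "list_all2 (piv ?n \<rho> 1) \<dots> PQ"
      unfolding PQ_def
    proof (intro list_all2_concat_map_same list_all2_map_same)
      fix i s assume "i \<in> set [0..<l]" "s \<in> set [0..<d i]"
      then have i: "i < l" and s: "s < d i" by auto
      then have "1 \<le> d i" by simp
      then have wp: "\<forall>j<l. \<forall>k<d j. w i $ (j * b + k) = (if j = i \<and> k = 0 then 1 else 0)"
        using w_props i by blast
      show "piv ?n \<rho> 1 (map_vec bit_to_int (Q_row t l b w i s)) (?N + i * b + s)"
        unfolding \<rho>_def using Q_piv[of l t b i s d w] l_bounds(2) b0 i s wp d_range by blast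
    qed
    ultimately show ?thesis unfolding L1_def P1_def using a by (auto intro: list_all2_appendI)
  qed
  have LA2: "list_all2 (piv ?n \<rho> 2) RL PR"
    unfolding RL_def PR_def
  proof (intro list_all2_concat_map_same list_all2_map_same)
    fix j q assume "j \<in> set [0..<l]" "q \<in> set [0..<b - d j]"
    then have j: "j < l" and q: "q < b - d j" by auto
    show "piv ?n \<rho> 2 (vec (t * b) (\<lambda>p. if p = ?N + j * b + d j + q then 2 else 0)) (?N + j * b + d j + q)"
      unfolding \<rho>_def using R_piv[of l t b j q d] l_bounds(2) b0 j q by blast
  qed
  define P where "P = P1 @ PR"
  define m where "m = length L1"
  have lenP1: "length P1 = m" using LA1 unfolding m_def by (simp add: list_all2_lengthD)
  have lenPR: "length PR = length RL" using LA2 by (simp add: list_all2_lengthD)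
  have lenRL: "length RL = r"
  proof -
    have "length RL = (\<Sum>j<l. b - d j)"
      unfolding RL_def by (simp add: length_concat o_def interv_sum_list_conv_sum_set_nat lessThan_atLeast0)
    then show ?thesis using sel_card by simp
  qed
  have lenPQ: "length PQ = (\<Sum>j<l. d j)"
    unfolding PQ_def by (simp add: length_concat o_def interv_sum_list_conv_sum_set_nat lessThan_atLeast0)
  have sumb: "(\<Sum>j<l. d j) + (\<Sum>j<l. b - d j) = l * b"
  proof -
    have "(\<Sum>j<l. d j) + (\<Sum>j<l. b - d j) = (\<Sum>j<l. d j + (b - d j))" by (simp add: sum.distrib)
    also have "\<dots> = (\<Sum>j<l. b)" using d_range by (intro sum.cong) auto
    finally show ?thesis by simp
  qed
  have lenP: "length P = ?n"
    unfolding P_def P1_def using lenPQ lenPR lenRL sel_card sumb tb by simp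
  have lenL: "length L = ?n" using lenP lenP1 lenPR unfolding L_def P_def m_def by simp
  have mn: "?n - m = r" using lenL lenRL unfolding L_def m_def by simp
  have mle: "m \<le> ?n" using lenL unfolding L_def m_def by simp
  have pivs: "piv ?n \<rho> (if i < m then 1 else 2) (L ! i) (P ! i)" if i: "i < ?n" for i
  proof (cases "i < m")
    case True
    then show ?thesis using LA1 lenP1 unfolding L_def P_def m_def
      by (simp add: nth_append list_all2_conv_all_nth)
  next
    case False
    then have "i - m < length RL" using i lenL unfolding L_def m_def by simp
    then show ?thesis using LA2 lenP1 False unfolding L_def P_def m_def
      by (simp add: nth_append list_all2_conv_all_nth)
  qed
  have setP: "set P = {0..<?n}"
  proof
    show "set P \<subseteq> {0..<?n}"
    proof
      fix p assume "p \<in> set P"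
      then obtain i where i: "i < length P" "P ! i = p" by (auto simp: in_set_conv_nth)
      then show "p \<in> {0..<?n}" using pivs[of i] lenP unfolding piv_def by auto
    qed
    show "{0..<?n} \<subseteq> set P"
    proof
      fix p assume p: "p \<in> {0..<?n}"
      show "p \<in> set P"
      proof (cases "p < ?N")
        case True then show ?thesis unfolding P_def P1_def by simp
      next
        case False
        define q where "q = p - ?N"
        have pq: "p = ?N + (q div b) * b + q mod b" using False unfolding q_def by simp
        have jl: "q div b < l" using p False tb b0 unfolding q_def by (auto simp: less_mult_imp_div_less)
        show ?thesis
        proof (cases "q mod b < d (q div b)")
          case True
          have "p \<in> set (map (\<lambda>s. ?N + (q div b) * b + s) [0..<d (q div b)])"
            unfolding set_map by (rule image_eqI[where x="q mod b"]) (use pq True in auto)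
          then have "p \<in> set PQ" unfolding PQ_def set_concat set_map using jl by auto
          then show ?thesis unfolding P_def P1_def by simp
        next
          case False
          have "p = ?N + (q div b) * b + d (q div b) + (q mod b - d (q div b))" using pq False by simp
          moreover have "q mod b - d (q div b) < b - d (q div b)" using False b0 by (simp add: diff_less_mono)
          ultimately have "p \<in> set (map (\<lambda>q'. ?N + (q div b)*b + d (q div b) + q') [0..<b - d (q div b)])"
            unfolding set_map by (intro image_eqI[where x="q mod b - d (q div b)"]) auto
          then have "p \<in> set PR" unfolding PR_def set_concat set_map using jl by auto
          then show ?thesis unfolding P_def by simp
        qed
      qed
    qed
  qed
  have distP: "distinct P" by (rule card_distinct) (simp add: setP lenP)
  define \<pi> where "\<pi> = (\<lambda>i. if i < ?n then P ! i else i)"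
  have bijP: "bij_betw ((!) P) {..<length P} (set P)" by (rule bij_betw_nth[OF distP]) auto
  have "bij_betw \<pi> {0..<?n} {0..<?n}"
  proof -
    have "bij_betw ((!) P) {0..<?n} {0..<?n}" using bijP lenP setP by (simp add: lessThan_atLeast0)
    then show ?thesis by (rule bij_betw_cong[THEN iffD1, rotated]) (auto simp: \<pi>_def)
  qed
  then have pi: "\<pi> permutes {0..<?n}" by (rule bij_imp_permutes) (auto simp: \<pi>_def)
  define A where "A = mat_of_rows ?n L"
  have Ac: "A \<in> carrier_mat ?n ?n" unfolding A_def using mat_of_rows_carrier(1)[of ?n L] lenL by metis
  have Aent: "A $$ (i, j) = L ! i $ j" if "i < ?n" "j < ?n" for i j
    unfolding A_def using that lenL by (simp add: mat_of_rows_index)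
  have inj: "inj_on \<rho> {0..<?n}" unfolding \<rho>_def using rho_inj[OF b0, of ?N l d] tb by simp
  have det: "det A = signof \<pi> * (\<Prod>i = 0..<?n. A $$ (i, \<pi> i))"
  proof (rule det_pivot[OF Ac pi inj])
    fix i j assume i: "i < ?n" and j: "j < ?n" and nz: "A $$ (i, j) \<noteq> 0"
    then show "\<rho> j \<le> \<rho> (\<pi> i)" using pivs[OF i] Aent[OF i j] unfolding piv_def \<pi>_def by auto
  qed
  have prod: "(\<Prod>i = 0..<?n. A $$ (i, \<pi> i)) = (\<Prod>i = 0..<?n. if i < m then 1 else 2)"
  proof (rule prod.cong)
    fix i assume "i \<in> {0..<?n}"
    then have i: "i < ?n" by simp
    then have "P ! i < ?n" using pivs[OF i] unfolding piv_def by auto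
    then show "A $$ (i, \<pi> i) = (if i < m then 1 else 2)"
      using pivs[OF i] Aent[OF i] i unfolding piv_def \<pi>_def by auto
  qed simp
  have p2: "(\<Prod>i = 0..<k. if i < m then 1 else (2::int)) = 2 ^ (k - m)" for k
    by (induction k) (auto simp: Suc_diff_le)
  have "\<bar>det A\<bar> = 2 ^ r"
    using det prod p2[of ?n] mn signof_pm_one[of \<pi>] by (auto simp: abs_mult)
  then show ?thesis using A_eq unfolding A_def GG_def by simp
qed

end
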